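(* Let $\mathcal{K}$ be a connected simplicial complex and $d$ a path-dominated distance function on $\mathrm{vert}(\mathcal{K})$. Then for any two vertices $x,y$ there exists a path-dominated shortest path from $x$ to $y$.
   Context: A function $d:\mathrm{vert}(\mathcal{K})\times\mathrm{vert}(\mathcal{K})\to\mathbb{R}_{\ge0}$ is a path-dominated distance function if (i) $d(x,y)\ge0$ and $d(x,x)=0$ for all vertices, and (ii) for any vertices $x,y$ there is a path $\pi^*$ from $x$ to $y$ in the $1$-skeleton with $d(x,y)=\max_{u\in\mathrm{vert}(\pi^* )}d(x,u)$. A path $\langle u_0=x,u_1,\dots,u_k=y\rangle$ along edges of $\mathcal{K}$ is a path-dominated shortest path if $d(x,u_i)=\max_{j\le i}d(x,u_j)$ for each $i\in[1,k]$. *)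

theory Defs
  imports Complex_Main
begin

definition simplicial_complex :: "'a set set \<Rightarrow> bool" where
  "simplicial_complex K \<longleftrightarrow> finite K \<and> (\<forall>\<sigma>\<in>K. finite \<sigma> \<and> \<sigma> \<noteq> {}) \<and>
     (\<forall>\<sigma>\<in>K. \<forall>\<tau>. \<tau> \<subseteq> \<sigma> \<and> \<tau> \<noteq> {} \<longrightarrow> \<tau> \<in> K)"

definition vert :: "'a set set \<Rightarrow> 'a set" where
  "vert K = \<Union>K"

definition is_edge :: "'a set set \<Rightarrow> 'a \<Rightarrow> 'a \<Rightarrow> bool" where
  "is_edge K u v \<longleftrightarrow> u \<noteq> v \<and> {u, v} \<in> K"

definition is_path :: "'a set set \<Rightarrow> 'a list \<Rightarrow> 'a \<Rightarrow> 'a \<Rightarrow> bool" where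
  "is_path K p x y \<longleftrightarrow> p \<noteq> [] \<and> hd p = x \<and> last p = y \<and> set p \<subseteq> vert K \<and>
     (\<forall>i. Suc i < length p \<longrightarrow> is_edge K (p ! i) (p ! Suc i))"

definition sc_connected :: "'a set set \<Rightarrow> bool" where
  "sc_connected K \<longleftrightarrow> (\<forall>x\<in>vert K. \<forall>y\<in>vert K. \<exists>p. is_path K p x y)"

definition path_dominated_distance :: "'a set set \<Rightarrow> ('a \<Rightarrow> 'a \<Rightarrow> real) \<Rightarrow> bool" where
  "path_dominated_distance K d \<longleftrightarrow>
     (\<forall>x\<in>vert K. \<forall>y\<in>vert K. d x y \<ge> 0) \<and> (\<forall>x\<in>vert K. d x x = 0) \<and>
     (\<forall>x\<in>vert K. \<forall>y\<in>vert K. \<exists>p. is_path K p x y \<and> d x y = Max (d x ` set p))"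

definition pd_shortest_path ::
    "'a set set \<Rightarrow> ('a \<Rightarrow> 'a \<Rightarrow> real) \<Rightarrow> 'a list \<Rightarrow> 'a \<Rightarrow> 'a \<Rightarrow> bool" where
  "pd_shortest_path K d p x y \<longleftrightarrow> is_path K p x y \<and>
     (\<forall>i\<in>{1..<length p}. d x (p ! i) = Max ((\<lambda>j. d x (p ! j)) ` {0..i}))"

end

theory Submission
  imports Defs
begin

definition mp :: "'a set set \<Rightarrow> ('a \<Rightarrow> 'a \<Rightarrow> real) \<Rightarrow> 'a \<Rightarrow> 'a list \<Rightarrow> 'a \<Rightarrow> bool" where
  "mp K d x p y \<longleftrightarrow> is_path K p x y \<and> (\<forall>i<length p. \<forall>j\<le>i. d x (p!j) \<le> d x (p!i))"

lemma path_append: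
  assumes "is_path K q x u" "is_path K r v y" "is_edge K u v"
  shows "is_path K (q @ r) x y"
  unfolding is_path_def
proof (intro conjI allI impI)
  show "q @ r \<noteq> []" "hd (q @ r) = x" "last (q @ r) = y" "set (q @ r) \<subseteq> vert K"
    using assms(1,2) unfolding is_path_def by auto
  fix i assume i: "Suc i < length (q @ r)"
  show "is_edge K ((q @ r) ! i) ((q @ r) ! Suc i)"
  proof (cases "Suc i < length q")
    case True then show ?thesis using assms(1) by (simp add: nth_append is_path_def)
  next
    case False
    show ?thesis
    proof (cases "Suc i = length q")
      case True
      have "q ! i = u" using assms(1) True unfolding is_path_def
        by (metis diff_Suc_1 last_conv_nth)
      moreover have "r ! 0 = v" using assms(2) unfolding is_path_def by (metis hd_conv_nth)
      ultimately show ?thesis using True assms(3) by (simp add: nth_append)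
    next
      case False2: False
      with False have "length q \<le> i" by simp
      then obtain k where k: "i = length q + k" using le_Suc_ex by blast
      have "Suc k < length r" using i k by simp
      then have "is_edge K (r ! k) (r ! Suc k)" using assms(2) unfolding is_path_def by blast
      then show ?thesis using k by (simp add: nth_append)
    qed
  qed
qed

lemma path_drop:
  assumes "is_path K p x y" "n < length p"
  shows "is_path K (drop n p) (p ! n) y"
  using assms unfolding is_path_def
  by (auto simp: hd_drop_conv_nth dest: in_set_dropD)

lemma main:
  assumes fin: "finite (vert K)"
    and pd: "\<forall>y\<in>vert K. \<exists>p. is_path K p x y \<and> d x y = Max (d x ` set p)"
  shows "y \<in> vert K \<Longrightarrow> \<exists>p. mp K d x p y"
proof (induction "card {w \<in> vert K. d x w < d x y}" arbitrary: y rule: less_induct)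
  case less
  obtain p where p: "is_path K p x y" and c: "d x y = Max (d x ` set p)"
    using pd less.prems by blast
  have pne: "p \<noteq> []" using p unfolding is_path_def by simp
  have le: "\<And>k. k < length p \<Longrightarrow> d x (p!k) \<le> d x y"
    using c by (simp add: nth_mem)
  define I where "I = {k. k < length p \<and> d x (p!k) < d x y}"
  have finI: "finite I" unfolding I_def by simp
  show ?case
  proof (cases "I = {}")
    case True
    then have "\<And>k. k < length p \<Longrightarrow> d x (p!k) = d x y"
      using le unfolding I_def by force
    then have "mp K d x p y" using p unfolding mp_def by simp
    then show ?thesis by blast
  next
    case False
    define i where "i = Max I"
    have iI: "i \<in> I" using False finI i_def by simp
    have imax: "\<And>k. k \<in> I \<Longrightarrow> k \<le> i" using finI i_def by simp
    have ilt: "i < length p" and ival: "d x (p!i) < d x y" using iI unfolding I_def by auto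
    have last_eq: "p ! (length p - 1) = y" using p pne unfolding is_path_def
      by (simp add: last_conv_nth)
    have si: "Suc i < length p"
    proof (rule ccontr)
      assume "\<not> ?thesis" then have "i = length p - 1" using ilt by simp
      then show False using ival last_eq by simp
    qed
    have rest: "\<And>k. i < k \<Longrightarrow> k < length p \<Longrightarrow> d x (p!k) = d x y"
    proof -
      fix k assume k1: "i < k" and k2: "k < length p"
      have "k \<notin> I" using imax k1 by fastforce
      then have "\<not> d x (p!k) < d x y" using k2 unfolding I_def by simp
      then show "d x (p!k) = d x y" using le[OF k2] by simp
    qed
    define u where "u = p ! i"
    have uv: "u \<in> vert K" using p ilt unfolding is_path_def u_def
      using nth_mem by blast
    have sub: "{w \<in> vert K. d x w < d x u} \<subset> {w \<in> vert K. d x w < d x y}"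
      using ival uv unfolding u_def by auto
    have "card {w \<in> vert K. d x w < d x u} < card {w \<in> vert K. d x w < d x y}"
      by (rule psubset_card_mono) (use fin sub in auto)
    then obtain q where q: "mp K d x q u" using less.hyps uv by blast
    have qp: "is_path K q x u" using q unfolding mp_def by simp
    have qne: "q \<noteq> []" using qp unfolding is_path_def by simp
    have qlast: "q ! (length q - 1) = u" using qp qne unfolding is_path_def
      by (simp add: last_conv_nth)
    have qle: "\<And>j. j < length q \<Longrightarrow> d x (q!j) \<le> d x u"
    proof -
      fix j assume j: "j < length q"
      have "length q - 1 < length q" using qne by simp
      moreover have "j \<le> length q - 1" using j by simp
      ultimately have "d x (q!j) \<le> d x (q!(length q - 1))" using q unfolding mp_def by blast
      then show "d x (q!j) \<le> d x u" using qlast by simp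
    qed
    define r where "r = drop (Suc i) p"
    have rp: "is_path K r (p ! Suc i) y" using path_drop[OF p si] r_def by simp
    have edge: "is_edge K u (p ! Suc i)" using p si unfolding is_path_def u_def by blast
    have path: "is_path K (q @ r) x y" by (rule path_append[OF qp rp edge])
    have rval: "\<And>k. k < length r \<Longrightarrow> d x (r!k) = d x y"
      unfolding r_def using rest by simp
    have "\<forall>i'<length (q @ r). \<forall>j\<le>i'. d x ((q @ r)!j) \<le> d x ((q @ r)!i')"
    proof (intro allI impI)
      fix a b assume a: "a < length (q @ r)" and b: "b \<le> a"
      show "d x ((q @ r)!b) \<le> d x ((q @ r)!a)"
      proof (cases "a < length q")
        case True
        then show ?thesis using q b unfolding mp_def by (simp add: nth_append)
      next
        case False
        have va: "d x ((q @ r)!a) = d x y" using False a rval by (simp add: nth_append)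
        show ?thesis
        proof (cases "b < length q")
          case True
          then show ?thesis using va qle[OF True] ival u_def by (simp add: nth_append)
        next
          case False
          then show ?thesis using va a b rval by (simp add: nth_append)
        qed
      qed
    qed
    then show ?thesis using path unfolding mp_def by blast
  qed
qed

theorem claim2:
  fixes K :: "'a set set" and d :: "'a \<Rightarrow> 'a \<Rightarrow> real"
  assumes "simplicial_complex K" and "sc_connected K"
    and "path_dominated_distance K d"
    and "x \<in> vert K" and "y \<in> vert K"
  shows "\<exists>p. pd_shortest_path K d p x y"
proof -
  have "finite K" "\<forall>s\<in>K. finite s" using assms(1) unfolding simplicial_complex_def by blast+
  then have fin: "finite (vert K)" unfolding vert_def by (simp add: finite_Union)
  have pd: "\<forall>y\<in>vert K. \<exists>p. is_path K p x y \<and> d x y = Max (d x ` set p)"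
    using assms(3,4) unfolding path_dominated_distance_def by blast
  obtain p where p: "mp K d x p y" using main[where K=K and x=x and d=d and y=y, OF fin pd assms(5)] by blast
  have "pd_shortest_path K d p x y"
    unfolding pd_shortest_path_def
  proof (intro conjI ballI)
    show "is_path K p x y" using p unfolding mp_def by simp
    fix i assume "i \<in> {1..<length p}"
    then have i: "i < length p" by simp
    show "d x (p ! i) = Max ((\<lambda>j. d x (p ! j)) ` {0..i})"
      by (rule Max_eqI[symmetric]) (use p i in \<open>auto simp: mp_def\<close>)
  qed
  then show ?thesis by blast
qed

end
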